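(* Under the standing assumptions (all robots have the same turning radius $r$; the group allocation satisfies the distinctness conditions, which is possible with $m=\lceil\log_2(n+2)\rceil+1$ groups; $G_m=\emptyset$), the following hold. (i) For every initial state, every robot $k$ and every vector $v\in\mathbb R^2$, there is a finite activation sequence whose net effect translates robot $k$ by $v$ and leaves the positions of all other robots unchanged. (ii) Consequently the swarm, with inputs $u$ measurable and taking values in $(0,\infty)$, is small-time locally controllable in positions at every initial state $(p_0,\Theta_0)$: $p_0$ lies in the interior of $\mathcal R_{(p_0,\Theta_0)}(T)$ for every $T>0$.
   Context: A swarm of $n$ planar robots; robot $j$ has state $(x_j,y_j,\theta_j)$, $\theta_j$ mod $2\pi$; all robots have the same turning radius $r>0$. Groups $G_1,\dots,G_m$ with activation vectors $\alpha_i\in\{0,1\}^n$ ($\alpha_{i,j}=1$ iff robot $j\in G_i$); standing assumptions: the patterns $(\alpha_{1,j},\dots,\alpha_{m-1,j})$, $j=1,\dots,n$, are pairwise distinct, none all zeros and none all ones, and $G_m=\emptyset$. Dynamics: a switching signal $\nu(t)\in\{1,\dots,m\}$ selects the active group and a scalar input $u(t)>0$ is applied; with $a_j=\alpha_{\nu(t),j}$, robot $j$ obeys $\dot x_j=a_j\cos\theta_j\,u$, $\dot y_j=a_j\sin\theta_j\,u$, $\dot\theta_j=(1-a_j)u/r$ (members of the active group translate forward, all others rotate counterclockwise in place). Write $p=(x_1,y_1,\dots,x_n,y_n)\in\mathbb R^{2n}$ for the positions and $\Theta=(\theta_1,\dots,\theta_n)$ for the orientations. $\mathcal R_{(p_0,\Theta_0)}(T)$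 is the set of all position vectors $p(t)$, $0\le t\le T$, reachable by trajectories starting at $(p_0,\Theta_0)$. The system is small-time locally controllable (STLC) in positions at $(p_0,\Theta_0)$ if $p_0$ is in the interior of $\mathcal R_{(p_0,\Theta_0)}(T)$ for all $T>0$. *)

theory Defs
  imports "HOL-Analysis.Analysis"
begin

text \<open>Robots are indexed by a finite type 'n (n = CARD('n)).  Planar positions are
  complex numbers; the position vector p is an element of complex^'n (i.e. R^(2n)),
  the orientation vector is an element of real^'n.  Groups are indexed 1..m;
  alpha i j holds iff robot j belongs to group G_i.\<close>

definition group_alloc_ok :: "(nat \<Rightarrow> 'n::finite \<Rightarrow> bool) \<Rightarrow> nat \<Rightarrow> bool" where
  "group_alloc_ok \<alpha> m \<longleftrightarrow>
     (\<forall>j k. j \<noteq> k \<longrightarrow> (\<exists>i\<in>{1..m-1}. \<alpha> i j \<noteq> \<alpha> i k)) \<and>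
     (\<forall>j. \<exists>i\<in>{1..m-1}. \<alpha> i j) \<and>
     (\<forall>j. \<exists>i\<in>{1..m-1}. \<not> \<alpha> i j) \<and>
     (\<forall>j. \<not> \<alpha> m j)"

text \<open>Net effect of activating group i while the integral of the input equals s:
  members translate by s in their heading direction, non-members rotate by s/r
  (exact flow of the dynamics over a segment with constant switching signal).\<close>

definition act_step :: "(nat \<Rightarrow> 'n::finite \<Rightarrow> bool) \<Rightarrow> real \<Rightarrow> nat \<times> real
     \<Rightarrow> (complex^'n) \<times> (real^'n) \<Rightarrow> (complex^'n) \<times> (real^'n)" where
  "act_step \<alpha> r is st =
     (case is of (i, s) \<Rightarrow> case st of (p, \<Theta>) \<Rightarrow>
       ((\<chi> j. if \<alpha> i j then p$j + complex_of_real s * cis (\<Theta>$j) else p$j),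
        (\<chi> j. if \<alpha> i j then \<Theta>$j else \<Theta>$j + s / r)))"

definition piecewise_switching :: "nat \<Rightarrow> real \<Rightarrow> (real \<Rightarrow> nat) \<Rightarrow> bool" where
  "piecewise_switching m T \<nu> \<longleftrightarrow>
     (\<forall>s\<in>{0..T}. \<nu> s \<in> {1..m}) \<and>
     (\<exists>(tt :: nat \<Rightarrow> real) N. tt 0 = 0 \<and> tt N = T \<and> (\<forall>k<N. tt k < tt (Suc k)) \<and>
        (\<forall>k<N. \<forall>s\<in>{tt k..<tt (Suc k)}. \<nu> s = \<nu> (tt k)))"

text \<open>Admissible input: measurable, positive-valued (and integrable, so that
  Caratheodory solutions exist) on [0,T].\<close>

definition admissible_input :: "real \<Rightarrow> (real \<Rightarrow> real) \<Rightarrow> bool" where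
  "admissible_input T u \<longleftrightarrow>
     u \<in> borel_measurable (restrict_space lborel {0..T}) \<and>
     set_integrable lborel {0..T} u \<and> (\<forall>t\<in>{0..T}. u t > 0)"

definition is_traj :: "(nat \<Rightarrow> 'n::finite \<Rightarrow> bool) \<Rightarrow> nat \<Rightarrow> real \<Rightarrow> real
     \<Rightarrow> (real \<Rightarrow> nat) \<Rightarrow> (real \<Rightarrow> real) \<Rightarrow> complex^'n \<Rightarrow> real^'n
     \<Rightarrow> (real \<Rightarrow> complex^'n) \<Rightarrow> (real \<Rightarrow> real^'n) \<Rightarrow> bool" where
  "is_traj \<alpha> m r T \<nu> u p0 \<Theta>0 p \<Theta> \<longleftrightarrow>
     piecewise_switching m T \<nu> \<and> admissible_input T u \<and>
     (\<forall>t\<in>{0..T}. \<forall>j.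
        \<Theta> t $ j = \<Theta>0 $ j + (LINT s:{0..t}|lborel. (if \<alpha> (\<nu> s) j then 0 else u s / r)) \<and>
        p t $ j = p0 $ j + (LINT s:{0..t}|lborel.
                     (if \<alpha> (\<nu> s) j then complex_of_real (u s) * cis (\<Theta> s $ j) else 0)))"

definition reach_set :: "(nat \<Rightarrow> 'n::finite \<Rightarrow> bool) \<Rightarrow> nat \<Rightarrow> real
     \<Rightarrow> complex^'n \<Rightarrow> real^'n \<Rightarrow> real \<Rightarrow> (complex^'n) set" where
  "reach_set \<alpha> m r p0 \<Theta>0 T =
     {p t | \<nu> u p \<Theta> t. is_traj \<alpha> m r T \<nu> u p0 \<Theta>0 p \<Theta> \<and> t \<in> {0..T}}"

end

theory Submission
  imports Defs
begin

lemma cis_period: "cis (x + 2*pi*real (N::nat)) = cis x"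
proof -
  have "cis (x + 2*pi*real N) = cis x * cis (2*pi*real N)" by (rule cis_mult[symmetric])
  also have "cis (2*pi*real N) = 1" by (rule cis_multiple_2pi) simp
  finally show ?thesis by simp
qed

lemma cis_eqI: "a = b + 2*pi* of_int k \<Longrightarrow> cis a = cis b"
proof -
  assume "a = b + 2*pi* of_int k"
  then have "cis a = cis b * cis (2*pi* of_int k)" using cis_mult[of b "2*pi* of_int k"] by simp
  also have "cis (2*pi* of_int k) = 1" by (rule cis_multiple_2pi) simp
  finally show ?thesis by simp
qed

lemma cis_2pi_add[simp]: "cis (2*pi + x) = cis x" "cis (x + 2*pi) = cis x"
  using cis_period[of x 1] by (simp_all add: add.commute)

lemma cis_add_pi[simp]: "cis (x + pi) = - cis x"
  by (simp add: cis_mult[symmetric])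

lemma cis_3pi[simp]: "cis (3*pi + x) = - cis x"
proof -
  have "3*pi + x = (x + pi) + 2*pi" by simp
  then show ?thesis by (simp only: cis_2pi_add cis_add_pi)
qed

lemma cis_4piN[simp]: "cis (4*(pi*real N) + x) = cis x"
proof -
  have "4*(pi*real N) + x = x + 2*pi*real (2*N)" by simp
  then show ?thesis by (simp only: cis_period)
qed

lemma cis_decomp:
  assumes "c > 0" "cmod w \<le> 2*c"
  shows "\<exists>\<phi>1 \<phi>2. complex_of_real c * (cis \<phi>1 + cis \<phi>2) = w"
proof -
  define \<beta> where "\<beta> = Arg w"
  define \<delta> where "\<delta> = arccos (cmod w / (2*c))"
  have cd: "cos \<delta> = cmod w / (2*c)" unfolding \<delta>_def
  proof (rule cos_arccos)
    have "0 \<le> cmod w / (2*c)" using assms(1) by simp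
    then show "-1 \<le> cmod w / (2*c)" by linarith
    show "cmod w / (2*c) \<le> 1" using assms by (simp add: field_simps)
  qed
  have "cis (\<beta>+\<delta>) + cis (\<beta>-\<delta>) = cis \<beta> * (cis \<delta> + cis (-\<delta>))"
    by (simp add: cis_mult distrib_left)
  also have "cis \<delta> + cis (-\<delta>) = complex_of_real (2 * cos \<delta>)"
    by (simp add: complex_eq_iff)
  finally have "complex_of_real c * (cis (\<beta>+\<delta>) + cis (\<beta>-\<delta>)) = complex_of_real (cmod w) * cis \<beta>"
    using assms by (simp add: cd)
  also have "\<dots> = w" using rcis_cmod_Arg[of w] by (simp add: rcis_def \<beta>_def)
  finally show ?thesis by blast
qed

locale swarm =
  fixes \<alpha> :: "nat \<Rightarrow> 'n::finite \<Rightarrow> bool" and m :: nat and r :: real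
  assumes r_pos: "r > 0" and ok: "group_alloc_ok \<alpha> m"
begin

definition valid :: "(nat \<times> real) list \<Rightarrow> bool" where
  "valid seq \<longleftrightarrow> (\<forall>(i, s)\<in>set seq. i \<in> {1..m} \<and> s > 0)"

definition eqv :: "(complex^'n) \<times> (real^'n) \<Rightarrow> (complex^'n) \<times> (real^'n) \<Rightarrow> bool" where
  "eqv a b \<longleftrightarrow> fst a = fst b \<and> (\<forall>j. cis (snd a $ j) = cis (snd b $ j))"

definition ach :: "((complex^'n) \<times> (real^'n) \<Rightarrow> (complex^'n) \<times> (real^'n)) \<Rightarrow> bool" where
  "ach F \<longleftrightarrow> (\<forall>st. \<exists>seq. valid seq \<and> eqv (fold (act_step \<alpha> r) seq st) (F st))"

lemma alpha_m[simp]: "\<not> \<alpha> m j"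
  using ok by (simp add: group_alloc_ok_def)

lemma valid_append[simp]: "valid (a @ b) \<longleftrightarrow> valid a \<and> valid b"
  by (auto simp: valid_def)

lemma eqv_refl[simp]: "eqv a a" by (simp add: eqv_def)
lemma eqv_trans: "eqv a b \<Longrightarrow> eqv b c \<Longrightarrow> eqv a c" by (simp add: eqv_def)

lemma step_eq: "act_step \<alpha> r (i, r*x) (p, \<Theta>) =
   ((\<chi> j. if \<alpha> i j then p$j + complex_of_real (r*x) * cis (\<Theta>$j) else p$j),
    (\<chi> j. if \<alpha> i j then \<Theta>$j else \<Theta>$j + x))"
proof -
  have e: "r * x / r = x" using r_pos by simp
  show ?thesis unfolding act_step_def by (simp only: e prod.case)
qed

lemma act_step_eqv: "eqv a b \<Longrightarrow> eqv (act_step \<alpha> r x a) (act_step \<alpha> r x b)"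
  by (cases x; cases a; cases b) (auto simp: eqv_def act_step_def vec_eq_iff cis_mult[symmetric])

lemma fold_eqv: "eqv a b \<Longrightarrow> eqv (fold (act_step \<alpha> r) seq a) (fold (act_step \<alpha> r) seq b)"
proof (induction seq arbitrary: a b)
  case (Cons x xs)
  then show ?case using act_step_eqv[OF Cons.prems, of x] by simp
qed simp

lemma ach_comp: "ach F \<Longrightarrow> ach G \<Longrightarrow> ach (\<lambda>st. G (F st))"
  unfolding ach_def
proof (intro allI)
  fix st assume F: "\<forall>st. \<exists>seq. valid seq \<and> eqv (fold (act_step \<alpha> r) seq st) (F st)"
    and G: "\<forall>st. \<exists>seq. valid seq \<and> eqv (fold (act_step \<alpha> r) seq st) (G st)"
  obtain s1 where s1: "valid s1" "eqv (fold (act_step \<alpha> r) s1 st) (F st)" using F by blast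
  obtain s2 where s2: "valid s2" "eqv (fold (act_step \<alpha> r) s2 (F st)) (G (F st))" using G by blast
  have "eqv (fold (act_step \<alpha> r) (s1 @ s2) st) (G (F st))"
    using fold_eqv[OF s1(2), of s2] s2(2) by (auto intro: eqv_trans)
  then show "\<exists>seq. valid seq \<and> eqv (fold (act_step \<alpha> r) seq st) (G (F st))"
    using s1 s2 by (intro exI[of _ "s1@s2"]) simp
qed

lemma ach_cong: "ach F \<Longrightarrow> (\<And>p \<Theta>. eqv (F (p,\<Theta>)) (G (p,\<Theta>))) \<Longrightarrow> ach G"
  unfolding ach_def by (metis eqv_trans surj_pair)

lemma ach_step: "i \<in> {1..m} \<Longrightarrow> s > 0 \<Longrightarrow> ach (act_step \<alpha> r (i, s))"
  unfolding ach_def by (intro allI exI[of _ "[(i,s)]"]) (simp add: valid_def)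

lemma ach_step': "i \<in> {1..m} \<Longrightarrow> x > 0 \<Longrightarrow> ach (act_step \<alpha> r (i, r*x))"
  using r_pos by (intro ach_step) auto

lemma m_pos: "m \<ge> 1"
proof -
  obtain j :: 'n where True by simp
  from ok obtain i where "i \<in> {1..m-1}" "\<alpha> i j" unfolding group_alloc_ok_def by blast
  then show ?thesis by auto
qed

definition rotall :: "real \<Rightarrow> (complex^'n) \<times> (real^'n) \<Rightarrow> (complex^'n) \<times> (real^'n)" where
  "rotall \<phi> st = (fst st, \<chi> j. snd st $ j + \<phi>)"

lemma ach_rotall: "ach (rotall \<phi>)"
proof -
  obtain N :: nat where N: "-\<phi>/(2*pi) < real N" using reals_Archimedean2 by blast
  have pos: "\<phi> + 2*pi*real N > 0" using N by (simp add: field_simps)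
  have "ach (act_step \<alpha> r (m, r*(\<phi> + 2*pi*real N)))"
    using m_pos pos by (intro ach_step') auto
  then show ?thesis
  proof (rule ach_cong)
    fix p \<Theta>
    show "eqv (act_step \<alpha> r (m, r * (\<phi> + 2 * pi * real N)) (p, \<Theta>)) (rotall \<phi> (p, \<Theta>))"
      unfolding step_eq rotall_def eqv_def
      by (simp add: vec_eq_iff add.assoc[symmetric] cis_period)
  qed
qed


lemma eqvI: "fst a = fst b \<Longrightarrow> (\<And>j. cis (snd a $ j) = cis (snd b $ j)) \<Longrightarrow> eqv a b"
  by (simp add: eqv_def)

definition mv :: "'n set \<Rightarrow> complex \<Rightarrow> (complex^'n) \<times> (real^'n) \<Rightarrow> (complex^'n) \<times> (real^'n)" where
  "mv S w st = ((\<chi> j. if j \<in> S then fst st $ j + w * cis (snd st $ j) else fst st $ j), snd st)"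

definition rt :: "'n set \<Rightarrow> (complex^'n) \<times> (real^'n) \<Rightarrow> (complex^'n) \<times> (real^'n)" where
  "rt T st = (fst st, \<chi> j. if j \<in> T then snd st $ j + pi else snd st $ j)"

definition movable where "movable S \<longleftrightarrow> (\<forall>w. ach (mv S w))"

lemma comm:
  assumes "movable S" "ach (rt T)"
  shows "movable (S \<inter> T)"
  unfolding movable_def
proof
  fix w
  have "ach (\<lambda>st. rt T (mv S (-w/2) (rt T (mv S (w/2) st))))"
    using assms unfolding movable_def
    by (metis (no_types) ach_comp)
  then show "ach (mv (S \<inter> T) w)"
  proof (rule ach_cong)
    fix p \<Theta>
    show "eqv (rt T (mv S (- w / 2) (rt T (mv S (w / 2) (p, \<Theta>))))) (mv (S \<inter> T) w (p, \<Theta>))"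
    proof (rule eqvI)
      show "fst (rt T (mv S (- w / 2) (rt T (mv S (w / 2) (p, \<Theta>))))) = fst (mv (S \<inter> T) w (p, \<Theta>))"
        unfolding vec_eq_iff
      proof
        fix j
        show "fst (rt T (mv S (- w / 2) (rt T (mv S (w / 2) (p, \<Theta>))))) $ j = fst (mv (S \<inter> T) w (p, \<Theta>)) $ j"
        proof (cases "j \<in> S")
          case True
          then show ?thesis
          proof (cases "j \<in> T")
            case True
            then show ?thesis using \<open>j \<in> S\<close> by (simp add: mv_def rt_def)
          next
            case False
            then show ?thesis using \<open>j \<in> S\<close> by (simp add: mv_def rt_def)
          qed
        qed (simp add: mv_def rt_def)
      qed
    next
      fix j
      show "cis (snd (rt T (mv S (- w / 2) (rt T (mv S (w / 2) (p, \<Theta>))))) $ j) =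
         cis (snd (mv (S \<inter> T) w (p, \<Theta>)) $ j)"
        by (cases "j \<in> T") (simp_all add: mv_def rt_def)
    qed
  qed
qed

lemma rt_compl: "ach (rt T) \<Longrightarrow> ach (rt (-T))"
proof -
  assume "ach (rt T)"
  then have "ach (\<lambda>st. rt T (rotall pi st))" using ach_comp[OF ach_rotall] by blast
  then show ?thesis
  proof (rule ach_cong)
    fix p \<Theta>
    show "eqv (rt T (rotall pi (p, \<Theta>))) (rt (- T) (p, \<Theta>))"
      by (rule eqvI) (auto simp: rt_def rotall_def)
  qed
qed

lemma rt_non: assumes "i \<in> {1..m}" shows "ach (rt {j. \<not> \<alpha> i j})"
proof -
  let ?s1 = "act_step \<alpha> r (i, r*(pi/2))" and ?s2 = "act_step \<alpha> r (m, r*pi)"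
  have "ach (\<lambda>st. ?s2 (?s1 (?s2 (?s1 st))))"
  proof -
    have a: "ach ?s1" using assms by (intro ach_step') auto
    have b: "ach ?s2" using m_pos by (intro ach_step') auto
    show ?thesis using ach_comp[OF ach_comp[OF ach_comp[OF a b] a] b] by simp
  qed
  then show ?thesis
  proof (rule ach_cong)
    fix p \<Theta>
    show "eqv (?s2 (?s1 (?s2 (?s1 (p, \<Theta>))))) (rt {j. \<not> \<alpha> i j} (p, \<Theta>))"
    proof (rule eqvI)
      show "fst (?s2 (?s1 (?s2 (?s1 (p, \<Theta>))))) = fst (rt {j. \<not> \<alpha> i j} (p, \<Theta>))"
        by (simp only: step_eq) (simp add: rt_def vec_eq_iff)
    next
      fix j
      show "cis (snd (?s2 (?s1 (?s2 (?s1 (p, \<Theta>))))) $ j) = cis (snd (rt {j. \<not> \<alpha> i j} (p, \<Theta>)) $ j)"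
      proof (cases "\<alpha> i j")
        case True then show ?thesis by (simp only: step_eq) (simp add: rt_def)
      next
        case False
        have "\<Theta> $ j + pi / 2 + pi + pi / 2 + pi = (\<Theta> $ j + pi) + 2*pi* of_int 1" by simp
        then show ?thesis using False by (simp only: step_eq) (simp add: rt_def cis_eqI)
      qed
    qed
  qed
qed

lemma base_movable: assumes "a \<in> {1..m}" shows "movable {j. \<alpha> a j}"
  unfolding movable_def
proof
  fix w
  obtain n :: nat where n: "cmod w / (4*pi*r) < real n" using reals_Archimedean2 by blast
  define N where "N = Suc n"
  define c where "c = r * (2*pi*real N)"
  have cpos: "c > 0" using r_pos by (simp add: c_def N_def)
  have "cmod w < 4*pi*r * real n" using n r_pos by (simp add: field_simps)
  moreover have "0 \<le> pi*(r*4)" using r_pos pi_gt_zero by simp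
  ultimately have "cmod w \<le> 2*c" unfolding c_def N_def by (simp add: algebra_simps)
  then obtain \<phi>1 \<phi>2 where phi: "complex_of_real c * (cis \<phi>1 + cis \<phi>2) = w"
    using cis_decomp[OF cpos] by blast
  let ?s = "act_step \<alpha> r (a, r*(2*pi*real N))"
  have "ach (\<lambda>st. rotall (-\<phi>2) (?s (rotall (\<phi>2-\<phi>1) (?s (rotall \<phi>1 st)))))"
  proof -
    have a: "ach ?s" using assms by (intro ach_step') (auto simp: N_def)
    show ?thesis using ach_comp[OF ach_comp[OF ach_comp[OF ach_comp[OF ach_rotall a] ach_rotall] a] ach_rotall] by simp
  qed
  then show "ach (mv {j. \<alpha> a j} w)"
  proof (rule ach_cong)
    fix p \<Theta>
    show "eqv (rotall (-\<phi>2) (?s (rotall (\<phi>2-\<phi>1) (?s (rotall \<phi>1 (p, \<Theta>)))))) (mv {j. \<alpha> a j} w (p, \<Theta>))"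
    proof (rule eqvI)
      have "complex_of_real c * cis (\<Theta> $ j + \<phi>1) + complex_of_real c * cis (\<Theta> $ j + \<phi>2) = w * cis (\<Theta> $ j)" for j
        unfolding phi[symmetric] by (simp add: cis_mult[symmetric] algebra_simps)
      then show "fst (rotall (-\<phi>2) (?s (rotall (\<phi>2-\<phi>1) (?s (rotall \<phi>1 (p, \<Theta>)))))) = fst (mv {j. \<alpha> a j} w (p, \<Theta>))"
        unfolding rotall_def by (simp only: step_eq fst_conv snd_conv) (simp add: mv_def vec_eq_iff c_def[symmetric] add.assoc)
    next
      fix j
      show "cis (snd (rotall (-\<phi>2) (?s (rotall (\<phi>2-\<phi>1) (?s (rotall \<phi>1 (p, \<Theta>)))))) $ j) = cis (snd (mv {j. \<alpha> a j} w (p, \<Theta>)) $ j)"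
      proof (cases "\<alpha> a j")
        case True then show ?thesis unfolding rotall_def by (simp only: step_eq fst_conv snd_conv) (simp add: mv_def)
      next
        case False
        have "\<Theta> $ j + \<phi>1 + 2*pi*real N + (\<phi>2-\<phi>1) + 2*pi*real N + -\<phi>2 = \<Theta> $ j + 2*pi* of_int (2 * int N)" by simp
        then show ?thesis using False unfolding rotall_def by (simp only: step_eq fst_conv snd_conv) (simp add: mv_def cis_eqI)
      qed
    qed
  qed
qed


lemma single_movable: "movable {k}"
proof -
  obtain a where a: "a \<in> {1..m-1}" "\<alpha> a k" using ok unfolding group_alloc_ok_def by blast
  have gen: "finite I \<Longrightarrow> I \<subseteq> {1..m} \<Longrightarrow> movable ({j. \<alpha> a j} \<inter> {j. \<forall>i\<in>I. \<alpha> i j = \<alpha> i k})" for I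
  proof (induction I rule: finite_induct)
    case empty
    have "a \<in> {1..m}" using a by auto
    then show ?case using base_movable[of a] by simp
  next
    case (insert i I)
    have rot: "ach (rt {j. \<alpha> i j = \<alpha> i k})"
    proof (cases "\<alpha> i k")
      case True
      then have "{j. \<alpha> i j = \<alpha> i k} = - {j. \<not> \<alpha> i j}" by auto
      then show ?thesis using rt_compl[OF rt_non[of i]] insert.prems by simp
    next
      case False
      then have "{j. \<alpha> i j = \<alpha> i k} = {j. \<not> \<alpha> i j}" by auto
      then show ?thesis using rt_non[of i] insert.prems by simp
    qed
    have "{j. \<alpha> a j} \<inter> {j. \<forall>i'\<in>insert i I. \<alpha> i' j = \<alpha> i' k} =
        ({j. \<alpha> a j} \<inter> {j. \<forall>i\<in>I. \<alpha> i j = \<alpha> i k}) \<inter> {j. \<alpha> i j = \<alpha> i k}" by auto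
    then show ?case using comm[OF insert.IH rot] insert.prems by simp
  qed
  have "{j. \<alpha> a j} \<inter> {j. \<forall>i\<in>{1..m-1}. \<alpha> i j = \<alpha> i k} = {k}"
  proof
    show "{j. \<alpha> a j} \<inter> {j. \<forall>i\<in>{1..m-1}. \<alpha> i j = \<alpha> i k} \<subseteq> {k}"
      using ok unfolding group_alloc_ok_def by blast
  qed (use a in auto)
  then show ?thesis using gen[of "{1..m-1}"] by auto
qed

lemma part_i: "\<exists>seq. valid seq \<and> fst (fold (act_step \<alpha> r) seq (p0, \<Theta>0)) = p0 + (\<chi> j. if j = k then v else 0)"
proof -
  obtain seq where seq: "valid seq" "eqv (fold (act_step \<alpha> r) seq (p0, \<Theta>0)) (mv {k} (v * cis (-(\<Theta>0$k))) (p0, \<Theta>0))"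
    using single_movable[of k] unfolding movable_def ach_def by blast
  have "v * cis (- (\<Theta>0 $ k)) * cis (\<Theta>0 $ k) = v" by (simp add: mult.assoc cis_mult)
  then have "fst (mv {k} (v * cis (-(\<Theta>0$k))) (p0, \<Theta>0)) = p0 + (\<chi> j. if j = k then v else 0)"
    by (simp add: mv_def vec_eq_iff)
  then show ?thesis using seq unfolding eqv_def by auto
qed

lemma multi: "finite F \<Longrightarrow> \<exists>seq. valid seq \<and> fst (fold (act_step \<alpha> r) seq st) = fst st + (\<chi> j. if j \<in> F then d$j else 0)"
proof (induction F arbitrary: st rule: finite_induct)
  case empty
  have "(\<chi> j. if j \<in> {} then d$j else 0) = (0::complex^'n)" by (simp add: vec_eq_iff)
  then show ?case by (intro exI[of _ "[]"]) (simp add: valid_def)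
next
  case (insert x F)
  obtain s1 where s1: "valid s1" "fst (fold (act_step \<alpha> r) s1 st) = fst st + (\<chi> j. if j \<in> F then d$j else 0)"
    using insert.IH by blast
  define st1 where "st1 = fold (act_step \<alpha> r) s1 st"
  obtain s2 where s2: "valid s2" "fst (fold (act_step \<alpha> r) s2 st1)
     = fst st1 + (\<chi> j. if j = x then d$x else 0)"
    using part_i[of "fst st1" "snd st1"] by auto
  have "fst (fold (act_step \<alpha> r) (s1@s2) st) = fst st + (\<chi> j. if j \<in> insert x F then d$j else 0)"
  proof -
    have "fst (fold (act_step \<alpha> r) (s1@s2) st) = fst (fold (act_step \<alpha> r) s2 st1)" by (simp add: st1_def)
    also have "\<dots> = fst st + (\<chi> j. if j \<in> insert x F then d$j else 0)"
      unfolding s2(2) unfolding st1_def s1(2) using insert.hyps(2) by (auto simp: vec_eq_iff)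
    finally show ?thesis .
  qed
  then show ?case using s1 s2 by (intro exI[of _ "s1@s2"]) simp
qed

lemma reach_all: "\<exists>seq. valid seq \<and> seq \<noteq> [] \<and> fst (fold (act_step \<alpha> r) seq st) = p"
proof -
  obtain seq where seq: "valid seq" "fst (fold (act_step \<alpha> r) seq st) = fst st + (\<chi> j. if j \<in> UNIV then (p - fst st)$j else 0)"
    using multi[OF finite_class.finite_UNIV] by blast
  have "fst (fold (act_step \<alpha> r) (seq @ [(m,1)]) st) = p"
    using seq(2) by (cases "fold (act_step \<alpha> r) seq st") (simp add: act_step_def vec_eq_iff)
  then show ?thesis using seq(1) m_pos by (intro exI[of _ "seq @ [(m,1)]"]) (simp add: valid_def)
qed

end

lemma lint_ind_sum:
  fixes a :: "nat \<Rightarrow> 'b::{banach, second_countable_topology}" and J :: "nat \<Rightarrow> real set"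
  assumes "\<And>k. J k \<in> sets lborel"
  shows "(LINT s:{0..t}|lborel. (\<Sum>k<N. indicator (J k) s *\<^sub>R a k)) = (\<Sum>k<N. measure lborel (J k \<inter> {0..t}) *\<^sub>R a k)"
proof -
  have eq: "(\<lambda>s. indicator {0..t} s *\<^sub>R (\<Sum>k<N. indicator (J k) s *\<^sub>R a k)) = (\<lambda>s. \<Sum>k<N. indicator (J k \<inter> {0..t}) s *\<^sub>R a k)"
    by (rule ext, simp only: scaleR_sum_right scaleR_scaleR indicator_inter_arith mult.commute)
  have sets: "J k \<inter> {0..t} \<in> sets lborel" for k using assms by simp
  have fin: "emeasure lborel (J k \<inter> {0..t}) < \<infinity>" for k
  proof -
    have "emeasure lborel (J k \<inter> {0..t}) \<le> emeasure lborel {0..t}"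
      by (rule emeasure_mono) auto
    also have "\<dots> < \<infinity>" by (simp add: emeasure_lborel_Icc_eq)
    finally show ?thesis .
  qed
  have "(LINT s:{0..t}|lborel. (\<Sum>k<N. indicator (J k) s *\<^sub>R a k)) =
      integral\<^sup>L lborel (\<lambda>s. \<Sum>k<N. indicator (J k \<inter> {0..t}) s *\<^sub>R a k)"
    unfolding set_lebesgue_integral_def eq ..
  also have "\<dots> = (\<Sum>k<N. measure lborel (J k \<inter> {0..t}) *\<^sub>R a k)"
  proof (rule has_bochner_integral_integral_eq)
    show "has_bochner_integral lborel (\<lambda>s. \<Sum>k<N. indicator (J k \<inter> {0..t}) s *\<^sub>R a k) (\<Sum>k<N. measure lborel (J k \<inter> {0..t}) *\<^sub>R a k)"
      by (intro has_bochner_integral_sum has_bochner_integral_indicator sets fin)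
  qed
  finally show ?thesis .
qed

locale traj = swarm \<alpha> m r for \<alpha> :: "nat \<Rightarrow> 'n::finite \<Rightarrow> bool" and m r +
  fixes seq :: "(nat \<times> real) list" and p0 :: "complex^'n" and \<Theta>0 :: "real^'n" and T :: real
  assumes seq_valid: "valid seq" and seq_ne: "seq \<noteq> []" and T_pos: "T > 0"
begin

definition "NN = length seq"
definition "ii k = fst (seq ! k)"
definition "ss k = snd (seq ! k)"
definition "SS = (\<Sum>k<NN. ss k)"
definition "cc = SS / T"
definition "tt k = (\<Sum>l<k. ss l) / cc"
definition "JJ k = (if Suc k = NN then {tt k..tt (Suc k)} else {tt k..<tt (Suc k)})"
definition "idx s = (LEAST k. s < tt (Suc k) \<or> Suc k = NN)"
definition "nu s = ii (idx s)"
definition "Th k = (\<chi> j. \<Theta>0$j + (\<Sum>l<k. if \<alpha> (ii l) j then 0 else ss l / r))"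
definition "Pk k = (\<chi> j. p0$j + (\<Sum>l<k. if \<alpha> (ii l) j then complex_of_real (ss l) * cis (Th l $ j) else 0))"
definition "Thf t = (\<chi> j. \<Theta>0$j + (\<Sum>k<NN. measure lborel (JJ k \<inter> {0..t}) * (if \<alpha> (ii k) j then 0 else cc / r)))"
definition "Pf t = (\<chi> j. p0$j + (\<Sum>k<NN. measure lborel (JJ k \<inter> {0..t}) *\<^sub>R (if \<alpha> (ii k) j then complex_of_real cc * cis (Th k $ j) else 0)))"

lemma seq_k: "k < NN \<Longrightarrow> ii k \<in> {1..m} \<and> ss k > 0"
proof -
  assume k: "k < NN"
  obtain i s where e: "seq ! k = (i, s)" by (cases "seq ! k")
  have "(i, s) \<in> set seq" using k nth_mem[of k seq] e by (simp add: NN_def)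
  then show ?thesis using seq_valid e unfolding valid_def ii_def ss_def by auto
qed

lemma ss_pos: "k < NN \<Longrightarrow> ss k > 0" using seq_k by simp
lemma ii_range: "k < NN \<Longrightarrow> ii k \<in> {1..m}" using seq_k by simp

lemma NN_pos: "NN > 0" using seq_ne by (simp add: NN_def)

lemma SS_pos: "SS > 0"
  unfolding SS_def using NN_pos ss_pos by (intro sum_pos) auto

lemma cc_pos: "cc > 0" using SS_pos T_pos by (simp add: cc_def)

lemma tt0: "tt 0 = 0" by (simp add: tt_def)

lemma ttN: "tt NN = T" using SS_pos T_pos by (simp add: tt_def cc_def SS_def[symmetric])

lemma tt_Suc: "tt (Suc k) = tt k + ss k / cc"
  by (simp add: tt_def add_divide_distrib)

lemma tt_mono: "a \<le> b \<Longrightarrow> b \<le> NN \<Longrightarrow> tt a \<le> tt b"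
proof (induction b rule: dec_induct)
  case (step n)
  then have "tt n \<le> tt (Suc n)" using ss_pos[of n] cc_pos by (simp add: tt_Suc)
  with step show ?case by simp
qed simp

lemma tt_less: "a < b \<Longrightarrow> b \<le> NN \<Longrightarrow> tt a < tt b"
proof -
  assume ab: "a < b" "b \<le> NN"
  have "tt a < tt (Suc a)" using ss_pos[of a] cc_pos ab by (simp add: tt_Suc)
  also have "\<dots> \<le> tt b" using ab by (intro tt_mono) auto
  finally show ?thesis .
qed

lemma tt_nonneg: "k \<le> NN \<Longrightarrow> 0 \<le> tt k" using tt_mono[of 0 k] tt0 by simp
lemma tt_le_T: "k \<le> NN \<Longrightarrow> tt k \<le> T" using tt_mono[of k NN] ttN by simp

lemma JJ_sub: "JJ k \<subseteq> {tt k..tt (Suc k)}" by (auto simp: JJ_def)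
lemma JJ_sup: "{tt k..<tt (Suc k)} \<subseteq> JJ k" by (auto simp: JJ_def)
lemma JJ_sets[simp]: "JJ k \<in> sets lborel" by (simp add: JJ_def)

lemma JJ_meas: "k < NN \<Longrightarrow> measure lborel (JJ k) = ss k / cc"
proof -
  assume k: "k < NN"
  have le: "tt k \<le> tt (Suc k)" using k by (intro tt_mono) auto
  have "measure lborel (JJ k) = tt (Suc k) - tt k"
  proof (cases "Suc k = NN")
    case True
    then have "JJ k = {tt k..tt (Suc k)}" by (simp add: JJ_def)
    then show ?thesis using le by (simp only: measure_lborel_Icc)
  next
    case False
    then have "JJ k = {tt k..<tt (Suc k)}" by (simp add: JJ_def)
    then show ?thesis using le by (simp only: measure_lborel_Ico)
  qed
  then show ?thesis by (simp add: tt_Suc)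
qed

lemma JJ_0T: "k < NN \<Longrightarrow> JJ k \<subseteq> {0..T}"
  using JJ_sub[of k] tt_nonneg[of k] tt_le_T[of "Suc k"] by auto

lemma JJ_lt: "k < NN \<Longrightarrow> Suc k \<noteq> NN \<Longrightarrow> s \<in> JJ k \<Longrightarrow> s < tt (Suc k)"
  by (simp add: JJ_def)

lemma JJ_ge: "s \<in> JJ k \<Longrightarrow> tt k \<le> s"
  using JJ_sub[of k] by (metis atLeastAtMost_iff subsetD)

lemma idx_props: assumes "s \<in> {0..T}" shows "idx s < NN" "s \<in> JJ (idx s)"
proof -
  let ?P = "\<lambda>k. s < tt (Suc k) \<or> Suc k = NN"
  have PN: "?P (NN - 1)" using NN_pos by simp
  have Pk: "?P (idx s)" unfolding idx_def by (rule LeastI[of ?P, OF PN])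
  have le: "idx s \<le> NN - 1" unfolding idx_def by (rule Least_le[of ?P, OF PN])
  then show lt: "idx s < NN" using NN_pos by simp
  have ge: "tt (idx s) \<le> s"
  proof (cases "idx s")
    case 0 then show ?thesis using assms tt0 by simp
  next
    case (Suc k)
    then have "\<not> ?P k" using not_less_Least[of k ?P] unfolding idx_def by simp
    then show ?thesis using Suc by simp
  qed
  show "s \<in> JJ (idx s)"
  proof (cases "Suc (idx s) = NN")
    case True then show ?thesis using ge assms ttN by (simp add: JJ_def)
  next
    case False then show ?thesis using ge Pk by (simp add: JJ_def)
  qed
qed

lemma JJ_disj: assumes "k < NN" "k' < NN" "s \<in> JJ k" "s \<in> JJ k'" shows "k = k'"
proof (rule ccontr)
  have A: False if "a < b" "b < NN" "s \<in> JJ a" "s \<in> JJ b" for a b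
  proof -
    have "Suc a \<noteq> NN" using that by simp
    then have "s < tt (Suc a)" using that by (intro JJ_lt) auto
    moreover have "tt (Suc a) \<le> tt b" using that by (intro tt_mono) auto
    moreover have "tt b \<le> s" using that(4) by (rule JJ_ge)
    ultimately show False by simp
  qed
  assume "k \<noteq> k'"
  then consider "k < k'" | "k' < k" by linarith
  then show False
  proof cases
    case 1 then show False using A[of k k'] assms by blast
  next
    case 2 then show False using A[of k' k] assms by blast
  qed
qed

lemma idx_eq: assumes "k < NN" "s \<in> JJ k" shows "idx s = k"
proof -
  have "s \<in> {0..T}" using JJ_0T[OF assms(1)] assms(2) by blast
  from idx_props[OF this] show ?thesis using JJ_disj[of "idx s" k s] assms by blast
qed

lemma ind_sum: fixes a :: "nat \<Rightarrow> 'b::real_vector" assumes "s \<in> {0..T}"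
  shows "(\<Sum>k<NN. indicator (JJ k) s *\<^sub>R a k) = a (idx s)"
proof -
  have "(\<Sum>k<NN. indicator (JJ k) s *\<^sub>R a k) = (\<Sum>k<NN. if k = idx s then a k else 0)"
  proof (rule sum.cong[OF refl])
    fix k assume k: "k \<in> {..<NN}"
    show "indicator (JJ k) s *\<^sub>R a k = (if k = idx s then a k else 0)"
    proof (cases "k = idx s")
      case True then show ?thesis using idx_props[OF assms] by simp
    next
      case False
      then have "s \<notin> JJ k" using idx_eq[of k s] k by auto
      then show ?thesis using False by simp
    qed
  qed
  also have "\<dots> = a (idx s)" using idx_props[OF assms] by simp
  finally show ?thesis .
qed


lemma Thf_eq: assumes "t \<in> {0..T}"
  shows "Thf t $ j = \<Theta>0 $ j + (LINT s:{0..t}|lborel. (if \<alpha> (nu s) j then 0 else (\<lambda>_. cc) s / r))"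
proof -
  have "(LINT s:{0..t}|lborel. (if \<alpha> (nu s) j then 0 else (\<lambda>_. cc) s / r)) =
      (LINT s:{0..t}|lborel. (\<Sum>k<NN. indicator (JJ k) s *\<^sub>R (if \<alpha> (ii k) j then 0 else cc / r)))"
  proof (rule set_lebesgue_integral_cong)
    show "\<forall>x. x \<in> {0..t} \<longrightarrow> (if \<alpha> (nu x) j then 0 else cc / r) =
        (\<Sum>k<NN. indicator (JJ k) x *\<^sub>R (if \<alpha> (ii k) j then 0 else cc / r))"
    proof (intro allI impI)
      fix x :: real assume "x \<in> {0..t}"
      then have "x \<in> {0..T}" using assms by auto
      then show "(if \<alpha> (nu x) j then 0 else cc / r) =
        (\<Sum>k<NN. indicator (JJ k) x *\<^sub>R (if \<alpha> (ii k) j then 0 else cc / r))"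
        by (simp only: ind_sum nu_def)
    qed
  qed simp
  also have "\<dots> = (\<Sum>k<NN. measure lborel (JJ k \<inter> {0..t}) *\<^sub>R (if \<alpha> (ii k) j then 0 else cc / r))"
    by (rule lint_ind_sum) (rule JJ_sets)
  finally show ?thesis by (simp add: Thf_def)
qed

lemma Thf_const: assumes k: "k < NN" and s: "s \<in> JJ k" and a: "\<alpha> (ii k) j"
  shows "Thf s $ j = Th k $ j"
proof -
  have trm: "measure lborel (JJ l \<inter> {0..s}) * (if \<alpha> (ii l) j then 0 else cc / r) =
      (if l \<in> {..<k} then (if \<alpha> (ii l) j then 0 else ss l / r) else 0)" if l: "l < NN" for l
  proof (cases l k rule: linorder_cases)
    case less
    have "tt (Suc l) \<le> tt k" using less k by (intro tt_mono) auto
    then have "JJ l \<subseteq> {0..s}" using JJ_sub[of l] tt_nonneg[of l] JJ_ge[OF s] l by auto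
    then have "JJ l \<inter> {0..s} = JJ l" by blast
    then show ?thesis using less JJ_meas[OF l] cc_pos by auto
  next
    case equal then show ?thesis using a by simp
  next
    case greater
    have "Suc k \<noteq> NN" using greater l by simp
    then have "s < tt (Suc k)" using k s by (intro JJ_lt)
    moreover have "tt (Suc k) \<le> tt l" using greater l by (intro tt_mono) auto
    ultimately have "JJ l \<inter> {0..s} = {}" using JJ_ge[of _ l] by force
    then show ?thesis using greater by simp
  qed
  have "(\<Sum>l<NN. measure lborel (JJ l \<inter> {0..s}) * (if \<alpha> (ii l) j then 0 else cc / r)) =
      (\<Sum>l<NN. (if l \<in> {..<k} then (if \<alpha> (ii l) j then 0 else ss l / r) else 0))"
    by (rule sum.cong[OF refl]) (simp add: trm)
  also have "\<dots> = (\<Sum>l\<in>{..<NN} \<inter> {..<k}. (if \<alpha> (ii l) j then 0 else ss l / r))"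
    by (rule sum.inter_restrict[symmetric]) simp
  also have "{..<NN} \<inter> {..<k} = {..<k}" using k by auto
  finally show ?thesis by (simp add: Thf_def Th_def)
qed

lemma Pf_eq: assumes "t \<in> {0..T}"
  shows "Pf t $ j = p0 $ j + (LINT s:{0..t}|lborel.
                     (if \<alpha> (nu s) j then complex_of_real ((\<lambda>_. cc) s) * cis (Thf s $ j) else 0))"
proof -
  have "(LINT s:{0..t}|lborel. (if \<alpha> (nu s) j then complex_of_real ((\<lambda>_. cc) s) * cis (Thf s $ j) else 0)) =
      (LINT s:{0..t}|lborel. (\<Sum>k<NN. indicator (JJ k) s *\<^sub>R (if \<alpha> (ii k) j then complex_of_real cc * cis (Th k $ j) else 0)))"
  proof (rule set_lebesgue_integral_cong)
    show "\<forall>x. x \<in> {0..t} \<longrightarrow> (if \<alpha> (nu x) j then complex_of_real ((\<lambda>_. cc) x) * cis (Thf x $ j) else 0) =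
        (\<Sum>k<NN. indicator (JJ k) x *\<^sub>R (if \<alpha> (ii k) j then complex_of_real cc * cis (Th k $ j) else 0))"
    proof (intro allI impI)
      fix x :: real assume "x \<in> {0..t}"
      then have x: "x \<in> {0..T}" using assms by auto
      have "(if \<alpha> (nu x) j then complex_of_real ((\<lambda>_. cc) x) * cis (Thf x $ j) else 0) =
          (if \<alpha> (ii (idx x)) j then complex_of_real cc * cis (Th (idx x) $ j) else 0)"
        using Thf_const[OF idx_props[OF x]] by (simp add: nu_def)
      then show "(if \<alpha> (nu x) j then complex_of_real ((\<lambda>_. cc) x) * cis (Thf x $ j) else 0) =
        (\<Sum>k<NN. indicator (JJ k) x *\<^sub>R (if \<alpha> (ii k) j then complex_of_real cc * cis (Th k $ j) else 0))"
        by (simp only: ind_sum[OF x])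
    qed
  qed simp
  also have "\<dots> = (\<Sum>k<NN. measure lborel (JJ k \<inter> {0..t}) *\<^sub>R (if \<alpha> (ii k) j then complex_of_real cc * cis (Th k $ j) else 0))"
    by (rule lint_ind_sum) (rule JJ_sets)
  finally show ?thesis by (simp add: Pf_def)
qed

lemma fold_take: "k \<le> NN \<Longrightarrow> fold (act_step \<alpha> r) (take k seq) (p0, \<Theta>0) = (Pk k, Th k)"
proof (induction k)
  case 0
  then show ?case by (simp add: Pk_def Th_def vec_eq_iff)
next
  case (Suc k)
  then have k: "k < length seq" by (simp add: NN_def)
  have e: "seq ! k = (ii k, ss k)" by (simp add: ii_def ss_def)
  have "fold (act_step \<alpha> r) (take (Suc k) seq) (p0, \<Theta>0) = act_step \<alpha> r (ii k, ss k) (Pk k, Th k)"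
    using Suc k by (simp add: take_Suc_conv_app_nth e)
  also have "\<dots> = (Pk (Suc k), Th (Suc k))"
    by (simp add: act_step_def Pk_def Th_def vec_eq_iff)
  finally show ?case .
qed

lemma Pf_final: "Pf T = fst (fold (act_step \<alpha> r) seq (p0, \<Theta>0))"
proof -
  have "fold (act_step \<alpha> r) seq (p0, \<Theta>0) = (Pk NN, Th NN)"
    using fold_take[of NN] by (simp add: NN_def)
  moreover have "Pf T = Pk NN"
  proof -
    have "measure lborel (JJ k \<inter> {0..T}) *\<^sub>R (if \<alpha> (ii k) j then complex_of_real cc * cis (Th k $ j) else 0)
        = (if \<alpha> (ii k) j then complex_of_real (ss k) * cis (Th k $ j) else 0)" if k: "k < NN" for k j
    proof -
      have "JJ k \<inter> {0..T} = JJ k" using JJ_0T[OF k] by blast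
      then show ?thesis using JJ_meas[OF k] cc_pos by (simp add: scaleR_conv_of_real)
    qed
    then show ?thesis by (simp add: Pf_def Pk_def vec_eq_iff)
  qed
  ultimately show ?thesis by simp
qed

lemma traj_ok: "is_traj \<alpha> m r T nu (\<lambda>_. cc) p0 \<Theta>0 Pf Thf"
proof -
  have sw: "piecewise_switching m T nu"
    unfolding piecewise_switching_def
  proof (intro conjI ballI exI[of _ tt] exI[of _ NN] allI impI)
    fix s assume "s \<in> {0..T}"
    then show "nu s \<in> {1..m}" using idx_props ii_range by (simp add: nu_def)
  next
    show "tt 0 = 0" by (rule tt0)
    show "tt NN = T" by (rule ttN)
  next
    fix k assume "k < NN" then show "tt k < tt (Suc k)" by (intro tt_less) auto
  next
    fix k s assume k: "k < NN" and s: "s \<in> {tt k..<tt (Suc k)}"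
    have "s \<in> JJ k" "tt k \<in> JJ k" using JJ_sup[of k] s by auto
    then show "nu s = nu (tt k)" using idx_eq[OF k] by (simp add: nu_def)
  qed
  have ad: "admissible_input T (\<lambda>_. cc)"
    unfolding admissible_input_def set_integrable_def
    using cc_pos T_pos by (auto simp: emeasure_lborel_Icc_eq)
  show ?thesis unfolding is_traj_def using sw ad Thf_eq Pf_eq by blast
qed

lemma reach_mem: "fst (fold (act_step \<alpha> r) seq (p0, \<Theta>0)) \<in> reach_set \<alpha> m r p0 \<Theta>0 T"
proof -
  have "\<exists>\<nu> u p \<Theta> t. Pf T = p t \<and> is_traj \<alpha> m r T \<nu> u p0 \<Theta>0 p \<Theta> \<and> t \<in> {0..T}"
    using traj_ok T_pos by (intro exI[of _ nu] exI[of _ "\<lambda>_. cc"] exI[of _ Pf] exI[of _ Thf] exI[of _ T]) auto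
  then show ?thesis unfolding reach_set_def Pf_final[symmetric] by blast
qed

end

theorem mainTheorem6:
  fixes \<alpha> :: "nat \<Rightarrow> 'n::finite \<Rightarrow> bool" and m :: nat and r :: real
  assumes "r > 0" and "group_alloc_ok \<alpha> m"
  shows "(\<forall>(p0 :: complex^'n) (\<Theta>0 :: real^'n) k (v :: complex).
            \<exists>seq :: (nat \<times> real) list.
              (\<forall>(i, s)\<in>set seq. i \<in> {1..m} \<and> s > 0) \<and>
              fst (fold (act_step \<alpha> r) seq (p0, \<Theta>0)) = p0 + (\<chi> j. if j = k then v else 0))
       \<and> (\<forall>(p0 :: complex^'n) (\<Theta>0 :: real^'n) T. T > 0 \<longrightarrow>
            p0 \<in> interior (reach_set \<alpha> m r p0 \<Theta>0 T))"
proof -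
  interpret swarm \<alpha> m r using assms by unfold_locales
  have A: "\<forall>(p0 :: complex^'n) (\<Theta>0 :: real^'n) k (v :: complex).
            \<exists>seq :: (nat \<times> real) list.
              (\<forall>(i, s)\<in>set seq. i \<in> {1..m} \<and> s > 0) \<and>
              fst (fold (act_step \<alpha> r) seq (p0, \<Theta>0)) = p0 + (\<chi> j. if j = k then v else 0)"
    using part_i unfolding valid_def by blast
  have B: "p0 \<in> interior (reach_set \<alpha> m r p0 \<Theta>0 T)" if T: "T > 0" for p0 \<Theta>0 T
  proof -
    have "reach_set \<alpha> m r p0 \<Theta>0 T = UNIV"
    proof (intro set_eqI iffI)
      fix p :: "complex^'n"
      obtain seq where seq: "valid seq" "seq \<noteq> []" "fst (fold (act_step \<alpha> r) seq (p0, \<Theta>0)) = p"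
        using reach_all by blast
      interpret traj \<alpha> m r seq p0 \<Theta>0 T using seq T by unfold_locales auto
      show "p \<in> reach_set \<alpha> m r p0 \<Theta>0 T" using reach_mem seq(3) by simp
    qed simp
    then show ?thesis by simp
  qed
  show ?thesis using A B by blast
qed

end
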